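(* Let $m$ be a positive integer and let $A,B$ be finite multisets of elements of $\{1,\dots,m\}$. If $\sum A\ge m^2$ and $\sum B\ge m^2$, then the pair $(A,B)$ is reducible, i.e., there exist a nonempty sub-multiset $A'\subseteq A$ and a nonempty sub-multiset $B'\subseteq B$ with $\sum A'=\sum B'$.
   Context: For a multiset $A$, $\sum A$ denotes the sum of its elements (counted with multiplicity). A pair of multisets $(A,B)$ is called reducible if the sum of some nonempty sub-multiset of $A$ equals the sum of some nonempty sub-multiset of $B$, and irreducible otherwise. *)

theory Defs
  imports "HOL-Library.Multiset"
begin

definition reducible :: "nat multiset \<Rightarrow> nat multiset \<Rightarrow> bool" where
  "reducible A B \<longleftrightarrow>
     (\<exists>A' B'. A' \<subseteq># A \<and> B' \<subseteq># B \<and> A' \<noteq> {#} \<and> B' \<noteq> {#} \<and> sum_mset A' = sum_mset B')"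

end

theory Submission
  imports Defs
begin

lemma prefix_bound: "\<forall>x\<in>set xs. x \<le> m \<Longrightarrow> sum_list (take i xs) \<le> i*m"
proof (induction xs arbitrary: i)
  case Nil then show ?case by simp
next
  case (Cons a xs) then show ?case
    by (cases i) (auto simp: add_mono)
qed

lemma take_split_sum: "i \<le> i' \<Longrightarrow> sum_list (take i' xs) = sum_list (take i xs) + sum_list (drop i (take i' xs))"
  by (metis min.absorb1 sum_list_append append_take_drop_id take_take)

lemma take_split_mset: "i \<le> i' \<Longrightarrow> mset (drop i (take i' xs)) \<subseteq># mset xs"
proof -
  have "mset xs = mset (take i' xs) + mset (drop i' xs)"
    by (metis append_take_drop_id mset_append)
  moreover have "mset (take i' xs) = mset (take i (take i' xs)) + mset (drop i (take i' xs))"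
    by (metis append_take_drop_id mset_append)
  ultimately have "mset xs = mset (drop i (take i' xs)) + (mset (take i (take i' xs)) + mset (drop i' xs))"
    by (simp add: ac_simps)
  then show ?thesis by (metis mset_subset_eq_add_left)
qed

theorem lemma1:
  fixes m :: nat and A B :: "nat multiset"
  assumes "m \<ge> 1"
    and "set_mset A \<subseteq> {1..m}" and "set_mset B \<subseteq> {1..m}"
    and "sum_mset A \<ge> m^2" and "sum_mset B \<ge> m^2"
  shows "reducible A B"
proof -
  obtain xs where xs: "mset xs = A" using ex_mset by blast
  obtain ys where ys: "mset ys = B" using ex_mset by blast
  have xsr: "\<forall>x\<in>set xs. 1 \<le> x \<and> x \<le> m" using assms(2) xs by auto
  have ysr: "\<forall>x\<in>set ys. 1 \<le> x \<and> x \<le> m" using assms(3) ys by auto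
  have sx: "sum_list xs \<ge> m*m" using assms(4) xs by (metis power2_eq_square sum_mset_sum_list)
  have sy: "sum_list ys \<ge> m*m" using assms(5) ys by (metis power2_eq_square sum_mset_sum_list)
  have "sum_list xs \<le> length xs * m" using prefix_bound[of xs m "length xs"] xsr by simp
  with sx have "m * m \<le> length xs * m" by linarith
  with assms(1) have lx: "m \<le> length xs" by simp
  define SA where "SA i = sum_list (take i xs)" for i
  define SB where "SB j = sum_list (take j ys)" for j
  define J where "J i = Max {j. j \<le> length ys \<and> SB j \<le> SA i}" for i
  define f where "f i = SA i - SB (J i)" for i
  have Jprop: "J i \<le> length ys \<and> SB (J i) \<le> SA i \<and> (\<forall>j. j \<le> length ys \<and> SB j \<le> SA i \<longrightarrow> j \<le> J i)" for i
  proof -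
    have fin: "finite {j. j \<le> length ys \<and> SB j \<le> SA i}" by simp
    have ne: "0 \<in> {j. j \<le> length ys \<and> SB j \<le> SA i}" by (simp add: SB_def)
    show ?thesis using Max_in[OF fin] Max_ge[OF fin] ne unfolding J_def by blast
  qed
  have SAle: "SA i \<le> i*m" for i unfolding SA_def using prefix_bound xsr by auto
  have fbound: "f i < m" if "i \<le> m" for i
  proof (cases "J i < length ys")
    case True
    have "\<not> SB (Suc (J i)) \<le> SA i" using Jprop[of i] True by (metis Suc_leI Suc_n_not_le_n)
    moreover have "SB (Suc (J i)) = SB (J i) + ys ! (J i)" unfolding SB_def using True
      by (simp add: take_Suc_conv_app_nth)
    moreover have "ys ! (J i) \<le> m" using ysr True by auto
    ultimately show ?thesis unfolding f_def using assms(1) by linarith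
  next
    case False
    then have "J i = length ys" using Jprop[of i] by simp
    then have "SB (J i) = sum_list ys" unfolding SB_def by simp
    moreover have "SA i \<le> m*m" using SAle[of i] that by (meson le_trans mult_le_mono1)
    ultimately show ?thesis unfolding f_def using sy Jprop[of i] assms(1) by simp
  qed
  have "\<not> inj_on f {0..m}"
  proof
    assume "inj_on f {0..m}"
    then have "card (f ` {0..m}) = m + 1" by (simp add: card_image)
    moreover have "f ` {0..m} \<subseteq> {0..<m}" using fbound by auto
    then have "card (f ` {0..m}) \<le> m" using card_mono[OF finite_atLeastLessThan, of _ 0 m] by simp
    ultimately show False by simp
  qed
  then obtain i i' where ii: "i < i'" "i' \<le> m" "f i = f i'"
  proof -
    obtain a b where ab: "a \<in> {0..m}" "b \<in> {0..m}" "a \<noteq> b" "f a = f b"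
      using \<open>\<not> inj_on f {0..m}\<close> unfolding inj_on_def by blast
    show ?thesis
    proof (cases "a < b")
      case True then show ?thesis using ab that by auto
    next
      case False then have "b < a" using ab(3) by simp
      then show ?thesis using ab that by auto
    qed
  qed
  have JJ: "J i \<le> J i'"
  proof -
    have "SA i \<le> SA i'" unfolding SA_def using take_split_sum[of i i' xs] ii by simp
    then show ?thesis using Jprop[of i] Jprop[of i'] by (meson le_trans)
  qed
  define A' where "A' = mset (drop i (take i' xs))"
  define B' where "B' = mset (drop (J i) (take (J i') ys))"
  have sA: "SA i' = SA i + sum_mset A'" unfolding SA_def A'_def
    using take_split_sum[of i i' xs] ii by (simp add: sum_mset_sum_list)
  have sB: "SB (J i') = SB (J i) + sum_mset B'" unfolding SB_def B'_def
    using take_split_sum[OF JJ, of ys] by (simp add: sum_mset_sum_list)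
  have eq: "sum_mset A' = sum_mset B'"
    using sA sB ii(3) Jprop[of i] Jprop[of i'] unfolding f_def by linarith
  have A'ne: "A' \<noteq> {#}" unfolding A'_def using ii lx by simp
  have "sum_mset A' > 0"
  proof -
    obtain x where "x \<in># A'" using multiset_nonemptyE[OF A'ne] .
    then have "x \<in> set (drop i (take i' xs))" unfolding A'_def by simp
    then have "x \<in> set xs" using set_drop_subset set_take_subset by (metis in_mono)
    then have "x \<ge> 1" using xsr by auto
    then have "\<not> (\<forall>y \<in> set_mset A'. y = 0)" using \<open>x \<in># A'\<close> by (metis not_one_le_zero)
    then show ?thesis by (simp only: sum_mset_0_iff[symmetric])
  qed
  then have B'ne: "B' \<noteq> {#}" using eq by auto
  have "A' \<subseteq># A" unfolding A'_def using take_split_mset[of i i' xs] ii(1) xs by simp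
  moreover have "B' \<subseteq># B" unfolding B'_def using take_split_mset[OF JJ, of ys] ys by simp
  ultimately show ?thesis unfolding reducible_def using A'ne B'ne eq by blast
qed

end
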